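(* Let $n\ge -1$ and let $C_n$ be the cochain complex described in the context. Define the weight of an admissible monomial $v_0^{k_0}\cdots v_n^{k_n}R^{a_1}\cdots R^{a_m}y_k$ to be $m$. Then the differential does not decrease weight: for any admissible monomial of weight $m$, its differential is a sum of admissible monomials of weight $\ge m$; and if the monomial ends in $y_1$ (i.e. $k=1$), its differential is a sum of admissible monomials of weight exactly $m$.
   Context: Work at the prime $2$. Fix an integer $n\ge -1$. Consider formal monomials $v_0^{k_0}\cdots v_n^{k_n}R^{a_1}\cdots R^{a_m}y_k$ with $k_i\ge 0$, $m\ge 0$, integers $a_i$, and $k\ge 1$. Such a monomial is admissible if $a_i\ge 2a_{i+1}$ for $1\le i<m$ and $a_m\ge 2^{k+1}$ (when $m\ge1$). $C_n$ has $\mathbb{F}_2$-basis the admissible monomials. Gradings: the filtration of a monomial is $s=\sum k_i + m$; its homological degree $h$ is defined by $h(y_k)=2^{k+1}-2$, each $R^a$ adds $a-1$, each $v_i$ subtracts $2^{i+1}-1$; its total degree is $-h-s$. Non-admissible expressions are rewritten in the basis using: $v_iv_j=v_jv_i$; $R^a v_i=\sum_{i<j\le n} v_j R^{a-2^{i+1}+2^{j+1}}$ (so $R^av_n=0$); the Adem relation $R^aR^b=\sum_c\binom{b-1-c}{a-2c}R^{a+b-c}R^c$ for $a<2b$; and instability: $R^c z=0$ whenever $z$ is a monomial with $h(z)\ge c-1$. The differential $d$ is $\mathbb{F}_2$-linear, raises filtration by $1$ and lowers total degree by $1$, and is determined by $dy_k=\sum_{1\le j<k}R^{2^{k+1}-2^{j+1}+1}y_j$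 (so $dy_1=0$), $d(v_ix)=v_i\,dx$, and $d(R^ax)=R^a(dx)+(a+1)\sum_{0\le j\le n}v_jR^{a+2^{j+1}-1}x$, followed by rewriting in the basis. (This is the Koszul complex computing $\mathrm{Ext}_{E(n)R}(QH_*BP,\mathbb{F}_2)$.) *)

theory Defs
  imports Main
begin

text \<open>Koszul complex C_n at the prime 2.  A formal monomial
  v_0^{k_0} ... v_n^{k_n} R^{a_1} ... R^{a_m} y_k is represented by the triple
  (K, [a_1,...,a_m], k) with K i = k_i (and K i = 0 for i > n).
  Elements of C_n (F_2-linear combinations) are represented by lists of
  monomials; the coefficient of a monomial z in a list L is count_list L z mod 2.\<close>

type_synonym mono = "(nat \<Rightarrow> nat) \<times> int list \<times> nat"

definition admissible :: "int \<Rightarrow> mono \<Rightarrow> bool" where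
  "admissible n z = (case z of (K, A, k) \<Rightarrow>
      1 \<le> k \<and> (\<forall>i. n < int i \<longrightarrow> K i = 0)
      \<and> (\<forall>i. Suc i < length A \<longrightarrow> A ! i \<ge> 2 * A ! Suc i)
      \<and> (A \<noteq> [] \<longrightarrow> last A \<ge> 2 ^ (k + 1)))"

definition weight :: "mono \<Rightarrow> nat" where
  "weight z = length (fst (snd z))"

definition hdeg :: "int \<Rightarrow> mono \<Rightarrow> int" where
  "hdeg n z = (case z of (K, A, k) \<Rightarrow>
      (2 ^ (k + 1) - 2) + (\<Sum>a\<leftarrow>A. a - 1)
      - (\<Sum>i<nat (n + 1). int (K i) * (2 ^ (i + 1) - 1)))"

definition vmul :: "nat \<Rightarrow> mono \<Rightarrow> mono" where
  "vmul j z = (case z of (K, A, k) \<Rightarrow> (K(j := Suc (K j)), A, k))"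

definition vmulK :: "(nat \<Rightarrow> nat) \<Rightarrow> mono \<Rightarrow> mono" where
  "vmulK K' z = (case z of (K, A, k) \<Rightarrow> (\<lambda>i. K' i + K i, A, k))"

text \<open>concatenation (= sum in F_2) of partial results; None = out of fuel\<close>
fun concat_opt :: "'a list option list \<Rightarrow> 'a list option" where
  "concat_opt [] = Some []"
| "concat_opt (x # xs) = (case x of None \<Rightarrow> None
      | Some l \<Rightarrow> (case concat_opt xs of None \<Rightarrow> None | Some r \<Rightarrow> Some (l @ r)))"

definition adem_coeff :: "int \<Rightarrow> int \<Rightarrow> int \<Rightarrow> nat" where
  "adem_coeff a b c = (if 0 \<le> a - 2 * c \<and> a - 2 * c \<le> b - 1 - c
      then nat (b - 1 - c) choose nat (a - 2 * c) else 0)"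

text \<open>R^a applied to an admissible monomial, rewritten in the admissible basis
  using instability, the relation R^a v_i = sum_{i<j<=n} v_j R^{a-2^{i+1}+2^{j+1}},
  and the Adem relations.\<close>
fun Rone :: "int \<Rightarrow> nat \<Rightarrow> int \<Rightarrow> mono \<Rightarrow> mono list option" where
  "Rone n 0 a z = None"
| "Rone n (Suc f) a (K, A, k) =
    (if a - 1 \<le> hdeg n (K, A, k) then Some []
     else if (\<exists>i. int i \<le> n \<and> 0 < K i) then
       (let i = (LEAST i. 0 < K i); z' = (K(i := K i - 1), A, k) in
        concat_opt (map (\<lambda>j. map_option (map (vmul j))
                (Rone n f (a - 2 ^ (i + 1) + 2 ^ (j + 1)) z'))
             [Suc i..<nat (n + 1)]))
     else (case A of
             [] \<Rightarrow> Some [(K, [a], k)]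
           | b # A' \<Rightarrow>
               (if 2 * b \<le> a then Some [(K, a # A, k)]
                else concat_opt (map (\<lambda>c.
                   if odd (adem_coeff a b c) then
                     (case Rone n f c (K, A', k) of None \<Rightarrow> None
                      | Some L \<Rightarrow> concat_opt (map (Rone n f (a + b - c)) L))
                   else Some []) [a - b + 1 .. a div 2]))))"

text \<open>differential of (0, A, k) = R^{a_1}...R^{a_m} y_k\<close>
fun dR :: "int \<Rightarrow> nat \<Rightarrow> int list \<Rightarrow> nat \<Rightarrow> mono list option" where
  "dR n f [] k = concat_opt (map (\<lambda>j. Rone n f (2 ^ (k + 1) - 2 ^ (j + 1) + 1) (\<lambda>_. 0, [], j))
                             [1..<k])"
| "dR n f (a # A) k = (case dR n f A k of None \<Rightarrow> None
     | Some L \<Rightarrow> concat_opt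
         [concat_opt (map (Rone n f a) L),
          (if odd (a + 1) then
             concat_opt (map (\<lambda>j. map_option (map (vmul j))
                 (Rone n f (a + 2 ^ (j + 1) - 1) (\<lambda>_. 0, A, k))) [0..<nat (n + 1)])
           else Some [])])"

text \<open>the differential, using d(v_i x) = v_i dx; fuel-bounded (None = fuel exhausted)\<close>
definition dfuel :: "int \<Rightarrow> nat \<Rightarrow> mono \<Rightarrow> mono list option" where
  "dfuel n f z = (case z of (K, A, k) \<Rightarrow> map_option (map (vmulK K)) (dR n f A k))"

definition coeff2 :: "mono list \<Rightarrow> mono \<Rightarrow> bool" where
  "coeff2 L z = odd (count_list L z)"

end

theory Submission
  imports Defs
begin

lemma concat_opt_mem:
  "concat_opt xs = Some L \<Longrightarrow> w \<in> set L \<Longrightarrow> \<exists>l. Some l \<in> set xs \<and> w \<in> set l"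
proof (induction xs arbitrary: L)
  case Nil then show ?case by simp
next
  case (Cons x xs)
  then show ?case by (fastforce split: option.splits)
qed

lemma concat_opt_map_mem:
  "concat_opt (map g xs) = Some L \<Longrightarrow> w \<in> set L \<Longrightarrow> \<exists>x\<in>set xs. \<exists>l. g x = Some l \<and> w \<in> set l"
  using concat_opt_mem[of "map g xs" L w] by force

lemma concat_opt_some:
  "(\<forall>x\<in>set xs. x \<noteq> None) \<Longrightarrow> concat_opt xs \<noteq> None"
  by (induction xs) (auto split: option.splits)

lemma concat_opt_mono:
  "concat_opt (map g xs) = Some L \<Longrightarrow> (\<And>x l. x \<in> set xs \<Longrightarrow> g x = Some l \<Longrightarrow> h x = Some l)
   \<Longrightarrow> concat_opt (map h xs) = Some L"
proof (induction xs arbitrary: L)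
  case Nil then show ?case by simp
next
  case (Cons x xs)
  then show ?case by (auto split: option.splits)
qed

lemma vmul_adm: "admissible n w \<Longrightarrow> int j \<le> n \<Longrightarrow> admissible n (vmul j w) \<and> weight (vmul j w) = weight w"
  by (cases w) (auto simp: admissible_def vmul_def weight_def)

lemma adm_tail: assumes "admissible n (K, b#A', k)" shows "admissible n (K, A', k)"
proof -
  have "\<forall>i. Suc i < length A' \<longrightarrow> A'!i \<ge> 2*A'!Suc i"
  proof (intro allI impI)
    fix i assume "Suc i < length A'"
    then have "Suc (Suc i) < length (b#A')" by simp
    with assms have "(b#A')!(Suc i) \<ge> 2*(b#A')!Suc (Suc i)" unfolding admissible_def by blast
    then show "A'!i \<ge> 2*A'!Suc i" by simp
  qed
  moreover have "A' \<noteq> [] \<longrightarrow> last A' \<ge> 2^(k+1)" using assms by (auto simp: admissible_def)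
  ultimately show ?thesis using assms by (auto simp: admissible_def)
qed

lemma adm_cons: assumes "admissible n (K, b#A', k)" "2*b \<le> a" shows "admissible n (K, a#b#A', k)"
proof -
  have "\<forall>i. Suc i < length (a#b#A') \<longrightarrow> (a#b#A')!i \<ge> 2*(a#b#A')!Suc i"
  proof (intro allI impI)
    fix i assume i: "Suc i < length (a#b#A')"
    show "(a#b#A')!i \<ge> 2*(a#b#A')!Suc i"
    proof (cases i)
      case 0 then show ?thesis using assms(2) by simp
    next
      case (Suc j)
      then have "Suc j < length (b#A')" using i by simp
      with assms(1) have "(b#A')!j \<ge> 2*(b#A')!Suc j" unfolding admissible_def by blast
      then show ?thesis using Suc by simp
    qed
  qed
  then show ?thesis using assms by (auto simp: admissible_def)
qed

lemma Rone_corr: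
  "Rone n f a z = Some L \<Longrightarrow> admissible n z \<Longrightarrow> w \<in> set L \<Longrightarrow> admissible n w \<and> weight w = Suc (weight z)"
proof (induction n f a z arbitrary: L w rule: Rone.induct)
  case (1 n a z) then show ?case by simp
next
  case (2 n f a K A k)
  note IH = "2.IH"
  show ?case
  proof (cases "a - 1 \<le> hdeg n (K,A,k)")
    case True then have "Rone n (Suc f) a (K,A,k) = Some []" by simp
    then show ?thesis using "2.prems"(1,3) by simp
  next
    case nI: False
    show ?thesis
    proof (cases "\<exists>i. int i \<le> n \<and> 0 < K i")
      case True
      define i where "i = (LEAST i. 0 < K i)"
      define z' where "z' = (K(i := K i - 1), A, k)"
      from True obtain i0 where i0: "int i0 \<le> n" "0 < K i0" by blast
      have iK: "0 < K i" unfolding i_def by (rule LeastI[of _ i0]) (use i0 in auto)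
      have ii0: "i \<le> i0" unfolding i_def by (rule Least_le) (use i0 in auto)
      have eq: "Rone n (Suc f) a (K,A,k) = concat_opt (map (\<lambda>j. map_option (map (vmul j)) (Rone n f (a - 2^(i+1) + 2^(j+1)) z')) [Suc i..<nat(n+1)])"
        using nI True unfolding i_def z'_def Let_def by (simp only: Rone.simps if_False if_True Let_def)
      from concat_opt_map_mem[OF "2.prems"(1)[unfolded eq] "2.prems"(3)]
      obtain j l where j: "j \<in> set [Suc i..<nat(n+1)]" and l: "map_option (map (vmul j)) (Rone n f (a - 2^(i+1) + 2^(j+1)) z') = Some l" and wl: "w \<in> set l"
        by blast
      from l obtain l' where l': "Rone n f (a - 2^(i+1) + 2^(j+1)) z' = Some l'" and ll': "l = map (vmul j) l'" by blast
      from wl ll' obtain w' where w': "w' \<in> set l'" and ww': "w = vmul j w'" by auto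
      have adz': "admissible n z'" using "2.prems"(2) ii0 i0 iK unfolding z'_def admissible_def by auto
      have "admissible n w' \<and> weight w' = Suc (weight z')"
        using IH(1)[OF nI True i_def z'_def j l' adz' w'] .
      moreover have "int j \<le> n" using j by auto
      ultimately show ?thesis using vmul_adm[of n w' j] ww' by (auto simp: z'_def weight_def)
    next
      case nv: False
      have K0: "K i = 0" for i
        using nv "2.prems"(2) unfolding admissible_def by (cases "int i \<le> n") auto
      show ?thesis
      proof (cases A)
        case Nil
        have "Rone n (Suc f) a (K,A,k) = Some [(K, [a], k)]" using nI nv Nil by (simp only: Rone.simps if_False list.case)
        moreover have "hdeg n (K,[],k) = 2^(k+1) - 2" using K0 by (simp add: hdeg_def)
        ultimately show ?thesis using "2.prems" nI Nil by (auto simp: admissible_def weight_def)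
      next
        case (Cons b A')
        show ?thesis
        proof (cases "2 * b \<le> a")
          case True
          have "Rone n (Suc f) a (K,A,k) = Some [(K, a # A, k)]" using nI nv Cons True by (simp only: Rone.simps if_False if_True list.case)
          then show ?thesis using "2.prems" True Cons adm_cons[of n K b A' k a]
            by (auto simp: weight_def)
        next
          case False
          have eq: "Rone n (Suc f) a (K,A,k) = concat_opt (map (\<lambda>c. if odd (adem_coeff a b c) then
                     (case Rone n f c (K, A', k) of None \<Rightarrow> None
                      | Some L \<Rightarrow> concat_opt (map (Rone n f (a + b - c)) L))
                   else Some []) [a - b + 1 .. a div 2])"
            using nI nv Cons False by (simp only: Rone.simps if_False list.case)
          from concat_opt_map_mem[OF "2.prems"(1)[unfolded eq] "2.prems"(3)]
          obtain c l where c: "c \<in> set [a - b + 1 .. a div 2]" and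
            l: "(if odd (adem_coeff a b c) then
                     (case Rone n f c (K, A', k) of None \<Rightarrow> None
                      | Some L \<Rightarrow> concat_opt (map (Rone n f (a + b - c)) L))
                   else Some []) = Some l" and wl: "w \<in> set l" by blast
          from l wl have od: "odd (adem_coeff a b c)" by (auto split: if_splits)
          with l obtain L1 where L1: "Rone n f c (K, A', k) = Some L1"
            and l2: "concat_opt (map (Rone n f (a + b - c)) L1) = Some l"
            by (auto split: option.splits)
          from concat_opt_map_mem[OF l2 wl] obtain u l3 where u: "u \<in> set L1"
            and l3: "Rone n f (a + b - c) u = Some l3" and wl3: "w \<in> set l3" by blast
          have adA': "admissible n (K, A', k)" using "2.prems"(2) Cons adm_tail by blast
          have u1: "admissible n u \<and> weight u = Suc (weight (K, A', k))"
            using IH(2)[OF nI nv Cons False c od L1 adA' u] .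
          have "admissible n w \<and> weight w = Suc (weight u)"
            using IH(3)[OF nI nv Cons False c od L1 u l3 _ wl3] u1 by blast
          then show ?thesis using u1 Cons by (simp add: weight_def)
        qed
      qed
    qed
  qed
qed

lemma Rone_nov:
  "(\<forall>i. int i \<le> n \<longrightarrow> fst z i = 0) \<Longrightarrow> Rone n f a z = Some L \<Longrightarrow> w \<in> set L \<Longrightarrow>
   fst w = fst z \<and> snd (snd w) = snd (snd z) \<and> sum_list (fst (snd w)) = a + sum_list (fst (snd z))"
proof (induction n f a z arbitrary: L w rule: Rone.induct)
  case (1 n a z) then show ?case by simp
next
  case (2 n f a K A k)
  note IH = "2.IH"
  have nv: "\<not> (\<exists>i. int i \<le> n \<and> 0 < K i)" using "2.prems"(1) by auto
  show ?case
  proof (cases "a - 1 \<le> hdeg n (K,A,k)")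
    case True then have "Rone n (Suc f) a (K,A,k) = Some []" by simp
    then show ?thesis using "2.prems"(2,3) by simp
  next
    case nI: False
    show ?thesis
    proof (cases A)
      case Nil
      have "Rone n (Suc f) a (K,A,k) = Some [(K, [a], k)]" using nI nv Nil by (simp only: Rone.simps if_False list.case)
      then show ?thesis using "2.prems" Nil by auto
    next
      case (Cons b A')
      show ?thesis
      proof (cases "2 * b \<le> a")
        case True
        have "Rone n (Suc f) a (K,A,k) = Some [(K, a # A, k)]" using nI nv Cons True by (simp only: Rone.simps if_False if_True list.case)
        then show ?thesis using "2.prems" Cons by auto
      next
        case False
        have eq: "Rone n (Suc f) a (K,A,k) = concat_opt (map (\<lambda>c. if odd (adem_coeff a b c) then
                   (case Rone n f c (K, A', k) of None \<Rightarrow> None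
                    | Some L \<Rightarrow> concat_opt (map (Rone n f (a + b - c)) L))
                 else Some []) [a - b + 1 .. a div 2])"
          using nI nv Cons False by (simp only: Rone.simps if_False list.case)
        from concat_opt_map_mem[OF "2.prems"(2)[unfolded eq] "2.prems"(3)]
        obtain c l where c: "c \<in> set [a - b + 1 .. a div 2]" and
          l: "(if odd (adem_coeff a b c) then
                   (case Rone n f c (K, A', k) of None \<Rightarrow> None
                    | Some L \<Rightarrow> concat_opt (map (Rone n f (a + b - c)) L))
                 else Some []) = Some l" and wl: "w \<in> set l" by blast
        from l wl have od: "odd (adem_coeff a b c)" by (auto split: if_splits)
        with l obtain L1 where L1: "Rone n f c (K, A', k) = Some L1"
          and l2: "concat_opt (map (Rone n f (a + b - c)) L1) = Some l"
          by (auto split: option.splits)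
        from concat_opt_map_mem[OF l2 wl] obtain u l3 where u: "u \<in> set L1"
          and l3: "Rone n f (a + b - c) u = Some l3" and wl3: "w \<in> set l3" by blast
        have u1: "fst u = K \<and> snd (snd u) = k \<and> sum_list (fst (snd u)) = c + sum_list A'"
          using IH(2)[OF nI nv Cons False c od _ L1 u] "2.prems"(1) by simp
        have "fst w = fst u \<and> snd (snd w) = snd (snd u) \<and> sum_list (fst (snd w)) = (a + b - c) + sum_list (fst (snd u))"
          using IH(3)[OF nI nv Cons False c od L1 u _ l3 wl3] u1 "2.prems"(1) by simp
        then show ?thesis using u1 Cons by simp
      qed
    qed
  qed
qed

lemma Rone_mono1:
  "Rone n f a z = Some L \<Longrightarrow> Rone n (Suc f) a z = Some L"
proof (induction n f a z arbitrary: L rule: Rone.induct)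
  case (1 n a z) then show ?case by simp
next
  case (2 n f a K A k)
  note IH = "2.IH"
  show ?case
  proof (cases "a - 1 \<le> hdeg n (K,A,k)")
    case True then show ?thesis using "2.prems" by simp
  next
    case nI: False
    show ?thesis
    proof (cases "\<exists>i. int i \<le> n \<and> 0 < K i")
      case True
      define i where "i = (LEAST i. 0 < K i)"
      define z' where "z' = (K(i := K i - 1), A, k)"
      have eq: "Rone n (Suc f) a (K,A,k) = concat_opt (map (\<lambda>j. map_option (map (vmul j)) (Rone n f (a - 2^(i+1) + 2^(j+1)) z')) [Suc i..<nat(n+1)])"
        using nI True unfolding i_def z'_def by (simp only: Rone.simps if_False if_True Let_def)
      have eq2: "Rone n (Suc (Suc f)) a (K,A,k) = concat_opt (map (\<lambda>j. map_option (map (vmul j)) (Rone n (Suc f) (a - 2^(i+1) + 2^(j+1)) z')) [Suc i..<nat(n+1)])"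
        using nI True unfolding i_def z'_def by (simp only: Rone.simps if_False if_True Let_def)
      show ?thesis unfolding eq2
        by (rule concat_opt_mono[OF "2.prems"[unfolded eq]]) (use IH(1)[OF nI True i_def z'_def] in fastforce)
    next
      case nv: False
      show ?thesis
      proof (cases A)
        case Nil
        then show ?thesis using nI nv "2.prems" by (simp only: Rone.simps if_False list.case)
      next
        case (Cons b A')
        show ?thesis
        proof (cases "2 * b \<le> a")
          case True
          then show ?thesis using nI nv Cons "2.prems" by (simp only: Rone.simps if_False if_True list.case)
        next
          case False
          have eq: "Rone n (Suc f) a (K,A,k) = concat_opt (map (\<lambda>c. if odd (adem_coeff a b c) then
                     (case Rone n f c (K, A', k) of None \<Rightarrow> None
                      | Some L \<Rightarrow> concat_opt (map (Rone n f (a + b - c)) L))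
                   else Some []) [a - b + 1 .. a div 2])"
            using nI nv Cons False by (simp only: Rone.simps if_False list.case)
          have eq2: "Rone n (Suc (Suc f)) a (K,A,k) = concat_opt (map (\<lambda>c. if odd (adem_coeff a b c) then
                     (case Rone n (Suc f) c (K, A', k) of None \<Rightarrow> None
                      | Some L \<Rightarrow> concat_opt (map (Rone n (Suc f) (a + b - c)) L))
                   else Some []) [a - b + 1 .. a div 2])"
            using nI nv Cons False by (simp only: Rone.simps if_False list.case)
          show ?thesis unfolding eq2
          proof (rule concat_opt_mono[OF "2.prems"[unfolded eq]])
            fix c l assume c: "c \<in> set [a - b + 1 .. a div 2]" and
              l: "(if odd (adem_coeff a b c) then
                     (case Rone n f c (K, A', k) of None \<Rightarrow> None
                      | Some L \<Rightarrow> concat_opt (map (Rone n f (a + b - c)) L))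
                   else Some []) = Some l"
            show "(if odd (adem_coeff a b c) then
                     (case Rone n (Suc f) c (K, A', k) of None \<Rightarrow> None
                      | Some L \<Rightarrow> concat_opt (map (Rone n (Suc f) (a + b - c)) L))
                   else Some []) = Some l"
            proof (cases "odd (adem_coeff a b c)")
              case od: True
              with l obtain L1 where L1: "Rone n f c (K, A', k) = Some L1"
                and l2: "concat_opt (map (Rone n f (a + b - c)) L1) = Some l"
                by (auto split: option.splits)
              have L1': "Rone n (Suc f) c (K, A', k) = Some L1" using IH(2)[OF nI nv Cons False c od L1] .
              have "concat_opt (map (Rone n (Suc f) (a + b - c)) L1) = Some l"
                by (rule concat_opt_mono[OF l2]) (rule IH(3)[OF nI nv Cons False c od L1])
              then show ?thesis using od L1' by simp
            next
              case False then show ?thesis using l by simp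
            qed
          qed
        qed
      qed
    qed
  qed
qed

lemma Rone_mono: assumes "Rone n f a z = Some L" "f \<le> f'" shows "Rone n f' a z = Some L"
  using assms(2) by (induction f' rule: dec_induct) (use assms(1) Rone_mono1 in auto)

lemma adm_pos: "admissible n (K, A, k) \<Longrightarrow> x \<in> set A \<Longrightarrow> (0::int) < x"
proof (induction A arbitrary: x)
  case Nil then show ?case by simp
next
  case (Cons y ys)
  have t: "admissible n (K, ys, k)" using adm_tail Cons.prems(1) by blast
  have py: "0 < y"
  proof (cases ys)
    case Nil
    then have "y \<ge> 2^(k+1)" using Cons.prems(1) by (auto simp: admissible_def)
    moreover have "(0::int) < 2^(k+1)" by simp
    ultimately show ?thesis by linarith
  next
    case (Cons y' ys')
    have "(y#ys)!0 \<ge> 2*(y#ys)!Suc 0" using Cons.prems(1) Cons unfolding admissible_def by fastforce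
    moreover have "0 < y'" using Cons.IH[OF t] Cons by simp
    ultimately show ?thesis using Cons by simp
  qed
  then show ?case using Cons.IH[OF t] Cons.prems(2) by auto
qed

lemma ex_fuel_list:
  fixes g :: "nat \<Rightarrow> 'a \<Rightarrow> 'b option"
  assumes "\<forall>x\<in>set xs. \<exists>f. g f x \<noteq> None"
    and "\<And>f f' x l. g f x = Some l \<Longrightarrow> f \<le> f' \<Longrightarrow> g f' x = Some l"
  shows "\<exists>f. \<forall>x\<in>set xs. g f x \<noteq> None"
  using assms(1)
proof (induction xs)
  case Nil then show ?case by simp
next
  case (Cons x xs)
  then obtain f1 where f1: "\<forall>y\<in>set xs. g f1 y \<noteq> None" by auto
  from Cons.prems obtain f2 where f2: "g f2 x \<noteq> None" by auto
  have "\<forall>y\<in>set (x#xs). g (max f1 f2) y \<noteq> None"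
  proof
    fix y assume "y \<in> set (x#xs)"
    then show "g (max f1 f2) y \<noteq> None"
    proof (cases "y = x")
      case True then show ?thesis using f2 assms(2)[where f=f2 and f'="max f1 f2" and x=x, OF _ max.cobounded2] by (cases "g f2 x") auto
    next
      case False then have "y \<in> set xs" using \<open>y \<in> set (x#xs)\<close> by simp
      then show ?thesis using f1 assms(2)[where f=f1 and f'="max f1 f2" and x=y, OF _ max.cobounded1] by (cases "g f1 y") auto
    qed
  qed
  then show ?case by blast
qed

definition rmeas :: "int \<Rightarrow> (mono \<times> mono) set" where
  "rmeas n = measures [\<lambda>z. \<Sum>i<nat(n+1). fst z i, \<lambda>z. length (fst (snd z)), \<lambda>z. nat (sum_list (fst (snd z)))]"

lemma wf_rmeas: "wf (rmeas n)" unfolding rmeas_def by (rule wf_measures)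

lemma Rone_ex: "admissible n z \<Longrightarrow> \<exists>f. Rone n f a z \<noteq> None"
proof (induction z arbitrary: a rule: wf_induct[OF wf_rmeas[of n]])
  case (1 z)
  obtain K A k where z: "z = (K,A,k)" by (cases z)
  note IH = "1.IH"[rule_format]
  show ?case
  proof (cases "a - 1 \<le> hdeg n (K,A,k)")
    case True then have "Rone n (Suc 0) a (K,A,k) = Some []" by simp
    then show ?thesis using z by blast
  next
    case nI: False
    show ?thesis
    proof (cases "\<exists>i. int i \<le> n \<and> 0 < K i")
      case True
      define i where "i = (LEAST i. 0 < K i)"
      define z' where "z' = (K(i := K i - 1), A, k)"
      from True obtain i0 where i0: "int i0 \<le> n" "0 < K i0" by blast
      have iK: "0 < K i" unfolding i_def by (rule LeastI[of _ i0]) (use i0 in auto)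
      have ii0: "i \<le> i0" unfolding i_def by (rule Least_le) (use i0 in auto)
      have adz': "admissible n z'" using "1.prems" z ii0 i0 iK unfolding z'_def admissible_def by auto
      have iS: "i \<in> {..<nat(n+1)}" using ii0 i0 by auto
      have "(\<Sum>j<nat(n+1). fst z' j) < (\<Sum>j<nat(n+1). fst z j)"
        by (rule sum_strict_mono_ex1) (use iS iK in \<open>auto simp: z z'_def\<close>)
      then have zz: "(z', z) \<in> rmeas n"
        unfolding rmeas_def by (simp add: measures_less)
      have eq: "\<And>f. Rone n (Suc f) a (K,A,k) = concat_opt (map (\<lambda>j. map_option (map (vmul j)) (Rone n f (a - 2^(i+1) + 2^(j+1)) z')) [Suc i..<nat(n+1)])"
        using nI True unfolding i_def z'_def by (simp only: Rone.simps if_False if_True Let_def)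
      have "\<exists>f. \<forall>j\<in>set [Suc i..<nat(n+1)]. map_option (map (vmul j)) (Rone n f (a - 2^(i+1) + 2^(j+1)) z') \<noteq> None"
      proof (rule ex_fuel_list)
        show "\<forall>j\<in>set [Suc i..<nat(n+1)]. \<exists>f. map_option (map (vmul j)) (Rone n f (a - 2^(i+1) + 2^(j+1)) z') \<noteq> None"
          using IH[OF zz adz'] by simp
        show "\<And>f f' x l. map_option (map (vmul x)) (Rone n f (a - 2^(i+1) + 2^(x+1)) z') = Some l \<Longrightarrow> f \<le> f' \<Longrightarrow>
           map_option (map (vmul x)) (Rone n f' (a - 2^(i+1) + 2^(x+1)) z') = Some l"
          using Rone_mono by fastforce
      qed
      then obtain F where F: "\<forall>j\<in>set [Suc i..<nat(n+1)]. map_option (map (vmul j)) (Rone n F (a - 2^(i+1) + 2^(j+1)) z') \<noteq> None" by blast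
      have "Rone n (Suc F) a (K,A,k) \<noteq> None" unfolding eq by (rule concat_opt_some) (use F in auto)
      then show ?thesis using z by blast
    next
      case nv: False
      show ?thesis
      proof (cases A)
        case Nil
        have "Rone n (Suc 0) a (K,A,k) = Some [(K, [a], k)]" using nI nv Nil by (simp only: Rone.simps if_False list.case)
        then show ?thesis using z by blast
      next
        case (Cons b A')
        show ?thesis
        proof (cases "2 * b \<le> a")
          case True
          have "Rone n (Suc 0) a (K,A,k) = Some [(K, a # A, k)]" using nI nv Cons True by (simp only: Rone.simps if_False if_True list.case)
          then show ?thesis using z by blast
        next
          case False
          define g where "g = (\<lambda>f c. if odd (adem_coeff a b c) then
                     (case Rone n f c (K, A', k) of None \<Rightarrow> None
                      | Some L \<Rightarrow> concat_opt (map (Rone n f (a + b - c)) L))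
                   else Some [])"
          have eq: "\<And>f. Rone n (Suc f) a (K,A,k) = concat_opt (map (g f) [a - b + 1 .. a div 2])"
            using nI nv Cons False unfolding g_def by (simp only: Rone.simps if_False list.case)
          have nov: "\<forall>i. int i \<le> n \<longrightarrow> fst (K, A', k) i = 0" using nv by auto
          have adA': "admissible n (K, A', k)" using "1.prems" z Cons adm_tail by blast
          have zA': "((K, A', k), z) \<in> rmeas n"
            unfolding rmeas_def using z Cons by (simp add: measures_less measures_lesseq)
          have gmono: "\<And>f f' c l. g f c = Some l \<Longrightarrow> f \<le> f' \<Longrightarrow> g f' c = Some l"
          proof -
            fix f f' c l assume gl: "g f c = Some l" and ff: "f \<le> f'"
            show "g f' c = Some l"
            proof (cases "odd (adem_coeff a b c)")
              case od: True
              with gl obtain L1 where L1: "Rone n f c (K, A', k) = Some L1"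
                and l2: "concat_opt (map (Rone n f (a + b - c)) L1) = Some l"
                unfolding g_def by (auto split: option.splits)
              have "concat_opt (map (Rone n f' (a + b - c)) L1) = Some l"
                by (rule concat_opt_mono[OF l2]) (use Rone_mono ff in blast)
              then show ?thesis using od Rone_mono[OF L1 ff] unfolding g_def by simp
            next
              case False then show ?thesis using gl unfolding g_def by simp
            qed
          qed
          have "\<exists>f. \<forall>c\<in>set [a - b + 1 .. a div 2]. g f c \<noteq> None"
          proof (rule ex_fuel_list[OF _ gmono])
            show "\<forall>c\<in>set [a - b + 1 .. a div 2]. \<exists>f. g f c \<noteq> None"
            proof
              fix c assume c: "c \<in> set [a - b + 1 .. a div 2]"
              show "\<exists>f. g f c \<noteq> None"
              proof (cases "odd (adem_coeff a b c)")
                case False then show ?thesis unfolding g_def by simp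
              next
                case od: True
                obtain f1 L1 where L1: "Rone n f1 c (K, A', k) = Some L1"
                  using IH[OF zA' adA', of c] by blast
                have cb: "c < b" using c False by auto
                have "\<exists>f. \<forall>u\<in>set L1. Rone n f (a + b - c) u \<noteq> None"
                proof (rule ex_fuel_list)
                  show "\<And>f f' x l. Rone n f (a + b - c) x = Some l \<Longrightarrow> f \<le> f' \<Longrightarrow> Rone n f' (a + b - c) x = Some l"
                    using Rone_mono by blast
                  show "\<forall>u\<in>set L1. \<exists>f. Rone n f (a + b - c) u \<noteq> None"
                  proof
                    fix u assume u: "u \<in> set L1"
                    have u1: "admissible n u \<and> weight u = Suc (weight (K, A', k))"
                      using Rone_corr[OF L1 adA' u] .
                    have u2: "fst u = K \<and> snd (snd u) = k \<and> sum_list (fst (snd u)) = c + sum_list A'"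
                      using Rone_nov[OF nov L1 u] by simp
                    obtain Ku Au ku where uu: "u = (Ku,Au,ku)" by (cases u)
                    have "\<forall>x\<in>set Au. 0 < x" using adm_pos[of n Ku Au ku] u1 uu by blast
                    then have s0: "0 \<le> sum_list Au" by (intro sum_list_nonneg) auto
                    have "sum_list Au < sum_list A" using u2 uu cb Cons by simp
                    then have lt: "nat (sum_list Au) < nat (sum_list A)" using s0 by simp
                    have "(u, z) \<in> rmeas n"
                      unfolding rmeas_def using z Cons u1 u2 uu lt by (simp add: in_measures weight_def)
                    then show "\<exists>f. Rone n f (a + b - c) u \<noteq> None" using IH u1 by blast
                  qed
                qed
                then obtain f2 where f2: "\<forall>u\<in>set L1. Rone n f2 (a + b - c) u \<noteq> None" by blast
                have L1': "Rone n (max f1 f2) c (K, A', k) = Some L1" using Rone_mono[OF L1 max.cobounded1] .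
                have "concat_opt (map (Rone n (max f1 f2) (a + b - c)) L1) \<noteq> None"
                proof (rule concat_opt_some)
                  show "\<forall>x\<in>set (map (Rone n (max f1 f2) (a + b - c)) L1). x \<noteq> None"
                  proof
                    fix x assume "x \<in> set (map (Rone n (max f1 f2) (a + b - c)) L1)"
                    then obtain u where u: "u \<in> set L1" "x = Rone n (max f1 f2) (a + b - c) u" by auto
                    from f2 u(1) obtain l where "Rone n f2 (a + b - c) u = Some l" by auto
                    then have "Rone n (max f1 f2) (a + b - c) u = Some l" using Rone_mono max.cobounded2 by blast
                    then show "x \<noteq> None" using u by simp
                  qed
                qed
                then show ?thesis using od L1' unfolding g_def by (auto split: option.splits)
              qed
            qed
          qed
          then obtain F where F: "\<forall>c\<in>set [a - b + 1 .. a div 2]. g F c \<noteq> None" by blast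
          have "Rone n (Suc F) a (K,A,k) \<noteq> None" unfolding eq by (rule concat_opt_some) (use F in auto)
          then show ?thesis using z by blast
        qed
      qed
    qed
  qed
qed

lemma concat_opt2: "concat_opt [x, y] = Some L \<Longrightarrow> \<exists>l1 l2. x = Some l1 \<and> y = Some l2 \<and> L = l1 @ l2"
  by (auto split: option.splits)

lemma dR_mono: "dR n f A k = Some L \<Longrightarrow> f \<le> f' \<Longrightarrow> dR n f' A k = Some L"
proof (induction A arbitrary: L)
  case Nil
  show ?case using Nil.prems(1) unfolding dR.simps
    by (rule concat_opt_mono) (use Rone_mono Nil.prems(2) in blast)
next
  case (Cons a A)
  obtain L0 where L0: "dR n f A k = Some L0" using Cons.prems(1) by (auto split: option.splits)
  have L0': "dR n f' A k = Some L0" using Cons.IH[OF L0 Cons.prems(2)] .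
  have e: "concat_opt [concat_opt (map (Rone n f a) L0),
          (if odd (a + 1) then
             concat_opt (map (\<lambda>j. map_option (map (vmul j))
                 (Rone n f (a + 2 ^ (j + 1) - 1) (\<lambda>_. 0, A, k))) [0..<nat (n + 1)])
           else Some [])] = Some L" using Cons.prems(1) L0 by simp
  from concat_opt2[OF e] obtain l1 l2 where l1: "concat_opt (map (Rone n f a) L0) = Some l1"
    and l2: "(if odd (a + 1) then
             concat_opt (map (\<lambda>j. map_option (map (vmul j))
                 (Rone n f (a + 2 ^ (j + 1) - 1) (\<lambda>_. 0, A, k))) [0..<nat (n + 1)])
           else Some []) = Some l2" and LL: "L = l1 @ l2" by blast
  have l1': "concat_opt (map (Rone n f' a) L0) = Some l1"
    by (rule concat_opt_mono[OF l1]) (use Rone_mono Cons.prems(2) in blast)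
  have l2': "(if odd (a + 1) then
             concat_opt (map (\<lambda>j. map_option (map (vmul j))
                 (Rone n f' (a + 2 ^ (j + 1) - 1) (\<lambda>_. 0, A, k))) [0..<nat (n + 1)])
           else Some []) = Some l2"
  proof (cases "odd (a + 1)")
    case True
    have l2s: "concat_opt (map (\<lambda>j. map_option (map (vmul j))
                 (Rone n f (a + 2 ^ (j + 1) - 1) (\<lambda>_. 0, A, k))) [0..<nat (n + 1)]) = Some l2" using l2 True by simp
    have "concat_opt (map (\<lambda>j. map_option (map (vmul j))
                 (Rone n f' (a + 2 ^ (j + 1) - 1) (\<lambda>_. 0, A, k))) [0..<nat (n + 1)]) = Some l2"
    proof (rule concat_opt_mono[OF l2s])
      fix j l assume "map_option (map (vmul j)) (Rone n f (a + 2 ^ (j + 1) - 1) (\<lambda>_. 0, A, k)) = Some l"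
      then obtain l' where "Rone n f (a + 2 ^ (j + 1) - 1) (\<lambda>_. 0, A, k) = Some l'" "l = map (vmul j) l'" by blast
      then show "map_option (map (vmul j)) (Rone n f' (a + 2 ^ (j + 1) - 1) (\<lambda>_. 0, A, k)) = Some l"
        using Rone_mono[OF _ Cons.prems(2)] by simp
    qed
    then show ?thesis using True by simp
  next
    case False then show ?thesis using l2 by simp
  qed
  show ?case using L0' l1' l2' LL by simp
qed

lemma adm_zero: "admissible n (K, A, k) \<Longrightarrow> admissible n (\<lambda>_. 0, A, k)"
  by (simp add: admissible_def)

lemma dR_corr:
  "dR n f A k = Some L \<Longrightarrow> admissible n (\<lambda>_. 0, A, k) \<Longrightarrow> w \<in> set L \<Longrightarrow>
   admissible n w \<and> length A \<le> weight w \<and> (k = 1 \<longrightarrow> weight w = length A)"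
proof (induction A arbitrary: L w)
  case Nil
  from concat_opt_map_mem[OF Nil.prems(1)[unfolded dR.simps] Nil.prems(3)]
  obtain j l where j: "j \<in> set [1..<k]" and l: "Rone n f (2 ^ (k + 1) - 2 ^ (j + 1) + 1) (\<lambda>_. 0, [], j) = Some l"
    and wl: "w \<in> set l" by blast
  have "admissible n (\<lambda>_. 0, [], j)" using j by (simp add: admissible_def)
  from Rone_corr[OF l this wl] show ?case using j by auto
next
  case (Cons a A)
  obtain L0 where L0: "dR n f A k = Some L0" using Cons.prems(1) by (auto split: option.splits)
  have adA: "admissible n (\<lambda>_. 0, A, k)" using adm_tail Cons.prems(2) by blast
  have e: "concat_opt [concat_opt (map (Rone n f a) L0),
          (if odd (a + 1) then
             concat_opt (map (\<lambda>j. map_option (map (vmul j))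
                 (Rone n f (a + 2 ^ (j + 1) - 1) (\<lambda>_. 0, A, k))) [0..<nat (n + 1)])
           else Some [])] = Some L" using Cons.prems(1) L0 by simp
  from concat_opt2[OF e] obtain l1 l2 where l1: "concat_opt (map (Rone n f a) L0) = Some l1"
    and l2: "(if odd (a + 1) then
             concat_opt (map (\<lambda>j. map_option (map (vmul j))
                 (Rone n f (a + 2 ^ (j + 1) - 1) (\<lambda>_. 0, A, k))) [0..<nat (n + 1)])
           else Some []) = Some l2" and LL: "L = l1 @ l2" by blast
  show ?case
  proof (cases "w \<in> set l1")
    case True
    from concat_opt_map_mem[OF l1 True] obtain u l where u: "u \<in> set L0"
      and l: "Rone n f a u = Some l" and wl: "w \<in> set l" by blast
    have "admissible n u \<and> length A \<le> weight u \<and> (k = 1 \<longrightarrow> weight u = length A)"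
      using Cons.IH[OF L0 adA u] .
    with Rone_corr[OF l _ wl] show ?thesis by auto
  next
    case False
    then have w2: "w \<in> set l2" using LL Cons.prems(3) by simp
    then have od: "odd (a + 1)" using l2 by (auto split: if_splits)
    have l2s: "concat_opt (map (\<lambda>j. map_option (map (vmul j))
                 (Rone n f (a + 2 ^ (j + 1) - 1) (\<lambda>_. 0, A, k))) [0..<nat (n + 1)]) = Some l2" using l2 od by simp
    from concat_opt_map_mem[OF l2s w2] obtain j l where
      j: "j \<in> set [0..<nat (n + 1)]" and l: "map_option (map (vmul j)) (Rone n f (a + 2 ^ (j + 1) - 1) (\<lambda>_. 0, A, k)) = Some l"
      and wl: "w \<in> set l" by blast
    from l obtain l' where l': "Rone n f (a + 2 ^ (j + 1) - 1) (\<lambda>_. 0, A, k) = Some l'" and ll: "l = map (vmul j) l'" by blast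
    from wl ll obtain w' where w': "w' \<in> set l'" and ww: "w = vmul j w'" by auto
    have "admissible n w' \<and> weight w' = Suc (weight (\<lambda>_. 0::nat, A, k))" using Rone_corr[OF l' adA w'] .
    moreover have "int j \<le> n" using j by auto
    ultimately show ?thesis using vmul_adm[of n w' j] ww by (simp add: weight_def)
  qed
qed

lemma dR_ex: "admissible n (\<lambda>_. 0, A, k) \<Longrightarrow> \<exists>f. dR n f A k \<noteq> None"
proof (induction A)
  case Nil
  have "\<exists>f. \<forall>j\<in>set [1..<k]. Rone n f (2 ^ (k + 1) - 2 ^ (j + 1) + 1) (\<lambda>_. 0, [], j) \<noteq> None"
  proof (rule ex_fuel_list)
    show "\<forall>j\<in>set [1..<k]. \<exists>f. Rone n f (2 ^ (k + 1) - 2 ^ (j + 1) + 1) (\<lambda>_. 0, [], j) \<noteq> None"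
    proof
      fix j assume "j \<in> set [1..<k]"
      then have "admissible n (\<lambda>_. 0, [], j)" by (simp add: admissible_def)
      then show "\<exists>f. Rone n f (2 ^ (k + 1) - 2 ^ (j + 1) + 1) (\<lambda>_. 0, [], j) \<noteq> None" by (rule Rone_ex)
    qed
    show "\<And>f f' x l. Rone n f (2 ^ (k + 1) - 2 ^ (x + 1) + 1) (\<lambda>_. 0, [], x) = Some l \<Longrightarrow> f \<le> f' \<Longrightarrow>
      Rone n f' (2 ^ (k + 1) - 2 ^ (x + 1) + 1) (\<lambda>_. 0, [], x) = Some l" using Rone_mono by blast
  qed
  then obtain F where F: "\<forall>j\<in>set [1..<k]. Rone n F (2 ^ (k + 1) - 2 ^ (j + 1) + 1) (\<lambda>_. 0, [], j) \<noteq> None" by blast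
  have "dR n F [] k \<noteq> None" unfolding dR.simps by (rule concat_opt_some) (use F in auto)
  then show ?case by blast
next
  case (Cons a A)
  have adA: "admissible n (\<lambda>_. 0, A, k)" using adm_tail Cons.prems by blast
  obtain f0 L0 where L0: "dR n f0 A k = Some L0" using Cons.IH[OF adA] by blast
  have "\<exists>f. \<forall>u\<in>set L0. Rone n f a u \<noteq> None"
  proof (rule ex_fuel_list)
    show "\<forall>u\<in>set L0. \<exists>f. Rone n f a u \<noteq> None"
      using dR_corr[OF L0 adA] Rone_ex by blast
    show "\<And>f f' x l. Rone n f a x = Some l \<Longrightarrow> f \<le> f' \<Longrightarrow> Rone n f' a x = Some l" using Rone_mono by blast
  qed
  then obtain f1 where f1: "\<forall>u\<in>set L0. Rone n f1 a u \<noteq> None" by blast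
  have "\<exists>f. \<forall>j\<in>set [0..<nat (n + 1)]. map_option (map (vmul j)) (Rone n f (a + 2 ^ (j + 1) - 1) (\<lambda>_. 0, A, k)) \<noteq> None"
  proof (rule ex_fuel_list)
    show "\<forall>j\<in>set [0..<nat (n + 1)]. \<exists>f. map_option (map (vmul j)) (Rone n f (a + 2 ^ (j + 1) - 1) (\<lambda>_. 0, A, k)) \<noteq> None"
      using Rone_ex[OF adA] by simp
    show "\<And>f f' x l. map_option (map (vmul x)) (Rone n f (a + 2 ^ (x + 1) - 1) (\<lambda>_. 0, A, k)) = Some l \<Longrightarrow> f \<le> f' \<Longrightarrow>
       map_option (map (vmul x)) (Rone n f' (a + 2 ^ (x + 1) - 1) (\<lambda>_. 0, A, k)) = Some l"
    proof -
      fix f f' x l assume h: "map_option (map (vmul x)) (Rone n f (a + 2 ^ (x + 1) - 1) (\<lambda>_. 0, A, k)) = Some l" and ff: "f \<le> f'"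
      then obtain l' where "Rone n f (a + 2 ^ (x + 1) - 1) (\<lambda>_. 0, A, k) = Some l'" "l = map (vmul x) l'" by blast
      then show "map_option (map (vmul x)) (Rone n f' (a + 2 ^ (x + 1) - 1) (\<lambda>_. 0, A, k)) = Some l"
        using Rone_mono[OF _ ff] by simp
    qed
  qed
  then obtain f2 where f2: "\<forall>j\<in>set [0..<nat (n + 1)]. map_option (map (vmul j)) (Rone n f2 (a + 2 ^ (j + 1) - 1) (\<lambda>_. 0, A, k)) \<noteq> None" by blast
  define F where "F = max f0 (max f1 f2)"
  have L0F: "dR n F A k = Some L0" using dR_mono[OF L0] by (simp add: F_def)
  have c1: "concat_opt (map (Rone n F a) L0) \<noteq> None"
  proof (rule concat_opt_some)
    show "\<forall>x\<in>set (map (Rone n F a) L0). x \<noteq> None"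
    proof
      fix x assume "x \<in> set (map (Rone n F a) L0)"
      then obtain u where u: "u \<in> set L0" "x = Rone n F a u" by auto
      from f1 u(1) obtain l where "Rone n f1 a u = Some l" by auto
      then have "Rone n F a u = Some l" using Rone_mono[of n f1 a u l F] by (simp add: F_def)
      then show "x \<noteq> None" using u by simp
    qed
  qed
  have c2: "concat_opt (map (\<lambda>j. map_option (map (vmul j))
                 (Rone n F (a + 2 ^ (j + 1) - 1) (\<lambda>_. 0, A, k))) [0..<nat (n + 1)]) \<noteq> None"
  proof (rule concat_opt_some)
    show "\<forall>x\<in>set (map (\<lambda>j. map_option (map (vmul j))
                 (Rone n F (a + 2 ^ (j + 1) - 1) (\<lambda>_. 0, A, k))) [0..<nat (n + 1)]). x \<noteq> None"
    proof
      fix x assume "x \<in> set (map (\<lambda>j. map_option (map (vmul j))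
                 (Rone n F (a + 2 ^ (j + 1) - 1) (\<lambda>_. 0, A, k))) [0..<nat (n + 1)])"
      then obtain j where j: "j \<in> set [0..<nat (n + 1)]" "x = map_option (map (vmul j))
                 (Rone n F (a + 2 ^ (j + 1) - 1) (\<lambda>_. 0, A, k))" by auto
      from f2 j(1) have "map_option (map (vmul j)) (Rone n f2 (a + 2 ^ (j + 1) - 1) (\<lambda>_. 0, A, k)) \<noteq> None" by blast
      then obtain l where "Rone n f2 (a + 2 ^ (j + 1) - 1) (\<lambda>_. 0, A, k) = Some l" by blast
      then have "Rone n F (a + 2 ^ (j + 1) - 1) (\<lambda>_. 0, A, k) = Some l"
        using Rone_mono[of n f2 _ _ l F] by (simp add: F_def)
      then show "x \<noteq> None" using j by simp
    qed
  qed
  have "dR n F (a # A) k \<noteq> None" using L0F c1 c2 by (auto split: option.splits)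
  then show ?case by blast
qed

theorem mainTheorem5:
  fixes n :: int and K :: "nat \<Rightarrow> nat" and A :: "int list" and k :: nat
  assumes "n \<ge> -1"
    and "admissible n (K, A, k)"
  shows "(\<exists>f. dfuel n f (K, A, k) \<noteq> None)
    \<and> (\<forall>f L. dfuel n f (K, A, k) = Some L \<longrightarrow>
          (\<forall>z. coeff2 L z \<longrightarrow> admissible n z \<and> weight z \<ge> length A
                \<and> (k = 1 \<longrightarrow> weight z = length A)))"
proof
  have ad0: "admissible n (\<lambda>_. 0, A, k)" using adm_zero[OF assms(2)] .
  show "\<exists>f. dfuel n f (K, A, k) \<noteq> None"
    using dR_ex[OF ad0] by (auto simp: dfuel_def)
  show "\<forall>f L. dfuel n f (K, A, k) = Some L \<longrightarrow>
          (\<forall>z. coeff2 L z \<longrightarrow> admissible n z \<and> weight z \<ge> length A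
                \<and> (k = 1 \<longrightarrow> weight z = length A))"
  proof (intro allI impI)
    fix f L z assume d: "dfuel n f (K, A, k) = Some L" and c: "coeff2 L z"
    from d obtain L0 where L0: "dR n f A k = Some L0" and LL: "L = map (vmulK K) L0"
      by (auto simp: dfuel_def)
    have "z \<in> set L" using c count_list_0_iff[of L z] by (auto simp: coeff2_def)
    then obtain w where w: "w \<in> set L0" and zw: "z = vmulK K w" using LL by auto
    have hw: "admissible n w \<and> length A \<le> weight w \<and> (k = 1 \<longrightarrow> weight w = length A)"
      using dR_corr[OF L0 ad0 w] .
    obtain Kw Aw kw where ww: "w = (Kw, Aw, kw)" by (cases w)
    have "admissible n z" using hw assms(2) zw ww by (auto simp: admissible_def vmulK_def)
    moreover have "weight z = weight w" using zw ww by (simp add: vmulK_def weight_def)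
    ultimately show "admissible n z \<and> weight z \<ge> length A \<and> (k = 1 \<longrightarrow> weight z = length A)"
      using hw by simp
  qed
qed

end
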